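(* Let $a_1,a_2$ be nonzero integers, $\alpha,\beta$ the roots of $X^2-a_1X-a_2$, $\gamma:=\alpha/\beta$ assumed not a root of unity, $\Delta:=a_1^2+4a_2$ assumed not a square, $\Delta_0$ its squarefree part, $K:=\mathbb{Q}(\sqrt\Delta)$, and $h$ the greatest positive integer such that $\gamma$ is an $h$th power in $K$. Let $d$ be an odd positive integer with $3\nmid d$ whenever $\Delta_0=-3$. Then \[ \sum_{v\mid d^\infty}\sum_{a\mid d}\mu(a)\,\delta_{U,dv,av}=\delta_U(d), \] where \[ \delta_U(d):=\frac1d\left(\frac{1}{(d^\infty,h)}+\eta_U(d)\right)\prod_{p\mid d}\left(1-\frac1{p^2}\right)^{-1}, \] with $\eta_U(d):=0$ if $\Delta>0$ or $\Delta_0\not\equiv1\pmod4$ or $\Delta_0\nmid d^\infty$, and $\eta_U(d):=\frac{(d^\infty,h)}{[(d^\infty,h),\,\Delta_0/(d,\Delta_0)]^2}$ otherwise.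
   Context: For positive integers $m\mid n$: $\delta_{U,n,m}:=\frac{(m,h)}{\varphi(n)m}$ if $\Delta>0$ or $\Delta_0\not\equiv1\pmod4$ or $\Delta_0\nmid n$, and $\delta_{U,n,m}:=\frac{2(m,h)}{\varphi(n)m}$ otherwise. $d^\infty=\prod_{p\mid d}p^\infty$: the sum over $v\mid d^\infty$ runs over positive integers all of whose prime factors divide $d$; $(d^\infty,h)$ is the largest divisor of $h$ composed of primes dividing $d$; $\Delta_0\mid d^\infty$ means every prime factor of $\Delta_0$ divides $d$; $[\cdot,\cdot]$ denotes lcm; $\mu$ is the Möbius function. *)

theory Defs
  imports "HOL-Analysis.Analysis" "HOL-Number_Theory.Number_Theory" "HOL-Computational_Algebra.Squarefree"
begin

definition moebius_mu :: "nat \<Rightarrow> int" where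
  "moebius_mu n = (if n > 0 \<and> squarefree n then (-1) ^ card (prime_factors n) else 0)"

definition quad_field :: "int \<Rightarrow> complex set" where
  "quad_field D = {of_rat r + of_rat s * csqrt (of_int D) | r s. True}"

definition dinf_gcd :: "nat \<Rightarrow> nat \<Rightarrow> nat" where
  "dinf_gcd d h = (GREATEST g. g dvd h \<and> (\<forall>p. prime p \<and> p dvd g \<longrightarrow> p dvd d))"

definition deltaU :: "int \<Rightarrow> int \<Rightarrow> nat \<Rightarrow> nat \<Rightarrow> nat \<Rightarrow> real" where
  "deltaU D D0 h n m =
     (if D > 0 \<or> D0 mod 4 \<noteq> 1 \<or> \<not> D0 dvd int n
      then real (gcd m h) / (real (totient n) * real m)
      else 2 * real (gcd m h) / (real (totient n) * real m))"

definition etaU :: "int \<Rightarrow> int \<Rightarrow> nat \<Rightarrow> nat \<Rightarrow> real" where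
  "etaU D D0 h d =
     (if D > 0 \<or> D0 mod 4 \<noteq> 1 \<or> \<not> (\<forall>p::nat. prime p \<and> int p dvd D0 \<longrightarrow> p dvd d)
      then 0
      else real (dinf_gcd d h) /
           (of_int (lcm (int (dinf_gcd d h)) (D0 div gcd (int d) D0))) ^ 2)"

definition deltaU_d :: "int \<Rightarrow> int \<Rightarrow> nat \<Rightarrow> nat \<Rightarrow> real" where
  "deltaU_d D D0 h d =
     (1 / real d) * (1 / real (dinf_gcd d h) + etaU D D0 h d) *
     (\<Prod>p\<in>prime_factors d. inverse (1 - 1 / (real p)^2))"

end

theory Submission
  imports Defs
begin

lemma rat_sq_int:
  fixes q :: rat and n :: int
  assumes "q^2 = of_int n"
  shows "\<exists>k. n = k^2"
proof -
  obtain a b where qa: "quotient_of q = (a, b)" by (cases "quotient_of q")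
  have qeq: "q = of_int a / of_int b" using quotient_of_div[OF qa] .
  have b0: "b > 0" using quotient_of_denom_pos[OF qa] .
  have cop: "coprime a b" using quotient_of_coprime[OF qa] .
  have "(of_int a / of_int b)^2 = (of_int n :: rat)" using assms qeq by simp
  then have "(of_int a)^2 = (of_int n :: rat) * (of_int b)^2" using b0 by (simp add: field_simps power2_eq_square)
  then have e: "a^2 = n * b^2" by (metis of_int_eq_iff of_int_mult of_int_power)
  have "b dvd a^2" unfolding e by (simp add: power2_eq_square)
  moreover have "coprime b (a^2)" using cop by (simp add: coprime_commute)
  ultimately have "is_unit b" by (metis coprime_common_divisor dvd_refl)
  then have "b = 1" using b0 by simp
  then show ?thesis using e by auto
qed

lemma qf_unique:
  fixes y :: complex and D :: int
  assumes y: "y^2 = of_int D" and ns: "\<not> (\<exists>k::int. D = k^2)"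
    and eq: "of_rat A + of_rat B * y = of_rat A' + of_rat B' * y"
  shows "A = A' \<and> B = B'"
proof (cases "B = B'")
  case True
  then show ?thesis using eq by (simp add: of_rat_eq_iff)
next
  case False
  have "of_rat (B - B') * y = of_rat (A' - A)" using eq by (simp add: of_rat_diff algebra_simps)
  then have yq: "y = of_rat ((A' - A) / (B - B'))" using False
    by (simp add: of_rat_divide field_simps of_rat_diff)
  have "of_rat (((A' - A) / (B - B'))^2) = (of_int D :: complex)" using y yq by (simp add: of_rat_power)
  then have "((A' - A) / (B - B'))^2 = of_int D"
    by (metis of_rat_eq_iff of_rat_of_int_eq)
  then show ?thesis using rat_sq_int ns by blast
qed

lemma pow_conj:
  fixes y :: complex and D :: int
  assumes y: "y^2 = of_int D"
  shows "\<exists>A B. (of_rat r + of_rat s * y)^n = of_rat A + of_rat B * y \<and>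
                (of_rat r - of_rat s * y)^n = of_rat A - of_rat B * y"
proof (induction n)
  case 0
  show ?case by (rule exI[of _ 1], rule exI[of _ 0]) simp
next
  case (Suc n)
  then obtain A B where AB: "(of_rat r + of_rat s * y)^n = of_rat A + of_rat B * y"
      "(of_rat r - of_rat s * y)^n = of_rat A - of_rat B * y" by blast
  have yy: "y * y = of_int D" using y by (simp add: power2_eq_square)
  have e1: "(of_rat r + of_rat s * y) * (of_rat A + of_rat B * y) =
        of_rat (A * r + B * s * of_int D) + of_rat (A * s + B * r) * y"
  proof -
    have "(of_rat r + of_rat s * y) * (of_rat A + of_rat B * y) =
          of_rat r * of_rat A + of_rat s * of_rat B * (y * y) + (of_rat A * of_rat s + of_rat B * of_rat r) * y"
      by (simp add: algebra_simps)
    also have "\<dots> = of_rat (A * r + B * s * of_int D) + of_rat (A * s + B * r) * y"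
      unfolding yy by (simp add: of_rat_add of_rat_mult algebra_simps)
    finally show ?thesis .
  qed
  have e2: "(of_rat r - of_rat s * y) * (of_rat A - of_rat B * y) =
        of_rat (A * r + B * s * of_int D) - of_rat (A * s + B * r) * y"
  proof -
    have "(of_rat r - of_rat s * y) * (of_rat A - of_rat B * y) =
          of_rat r * of_rat A + of_rat s * of_rat B * (y * y) - (of_rat A * of_rat s + of_rat B * of_rat r) * y"
      by (simp add: algebra_simps)
    also have "\<dots> = of_rat (A * r + B * s * of_int D) - of_rat (A * s + B * r) * y"
      unfolding yy by (simp add: of_rat_add of_rat_mult algebra_simps)
    finally show ?thesis .
  qed
  show ?case
    by (rule exI[of _ "A * r + B * s * of_int D"], rule exI[of _ "A * s + B * r"])
       (simp only: power_Suc AB e1 e2)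
qed


fun Wseq :: "int \<Rightarrow> int \<Rightarrow> nat \<Rightarrow> int" where
  "Wseq p c 0 = 2"
| "Wseq p c (Suc 0) = p"
| "Wseq p c (Suc (Suc k)) = p * Wseq p c (Suc k) - c * Wseq p c k"

lemma Wseq_complex:
  fixes x x' :: complex and p q nu :: int
  assumes s: "x + x' = of_int p / of_int q" and m: "x * x' = of_int nu" and q0: "q \<noteq> 0"
  shows "of_int (Wseq p (nu * q^2) k) = of_int q ^ k * (x^k + x'^k)"
proof (induction k rule: less_induct)
  case (less k)
  have qq: "(of_int q :: complex) \<noteq> 0" using q0 by simp
  show ?case
  proof (cases k)
    case 0
    then show ?thesis by simp
  next
    case (Suc j)
    show ?thesis
    proof (cases j)
      case 0
      then show ?thesis using Suc s qq by (simp add: field_simps)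
    next
      case (Suc i)
      have k: "k = Suc (Suc i)" using \<open>k = Suc j\<close> Suc by simp
      have IH1: "of_int (Wseq p (nu * q^2) (Suc i)) = of_int q ^ Suc i * (x^(Suc i) + x'^(Suc i))"
        using less k by simp
      have IH0: "of_int (Wseq p (nu * q^2) i) = of_int q ^ i * (x^i + x'^i)"
        using less k by simp
      have rec: "x^(Suc (Suc i)) + x'^(Suc (Suc i)) = (x + x') * (x^(Suc i) + x'^(Suc i)) - (x * x') * (x^i + x'^i)"
        by (simp add: algebra_simps)
      have "of_int (Wseq p (nu * q^2) (Suc (Suc i))) =
            of_int p * (of_int q ^ Suc i * (x^(Suc i) + x'^(Suc i))) - of_int nu * of_int q ^ 2 * (of_int q ^ i * (x^i + x'^i))"
        using IH1 IH0 by simp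
      also have "\<dots> = of_int q ^ Suc (Suc i) * ((x + x') * (x^(Suc i) + x'^(Suc i)) - (x * x') * (x^i + x'^i))"
      proof -
        have pq: "(of_int p :: complex) = of_int q * (x + x')" using s qq by (simp add: field_simps)
        show ?thesis unfolding pq m[symmetric] by (simp add: power2_eq_square algebra_simps)
      qed
      also have "\<dots> = of_int q ^ Suc (Suc i) * (x^(Suc (Suc i)) + x'^(Suc (Suc i)))" by (simp only: rec)
      finally show ?thesis using k by simp
    qed
  qed
qed

lemma Wseq_cong:
  fixes p q nu :: int
  shows "[Wseq p (nu * q^2) (Suc k) = p ^ Suc k] (mod q)"
proof (induction k rule: less_induct)
  case (less k)
  show ?case
  proof (cases k)
    case 0
    then show ?thesis by simp
  next
    case (Suc j)
    have IH: "[Wseq p (nu * q^2) (Suc j) = p ^ Suc j] (mod q)" using less Suc by simp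
    have z: "[nu * q^2 * Wseq p (nu * q^2) j = 0] (mod q)"
      by (simp add: cong_0_iff power2_eq_square)
    have "[p * Wseq p (nu * q^2) (Suc j) - nu * q^2 * Wseq p (nu * q^2) j = p * p ^ Suc j - 0] (mod q)"
      by (intro cong_diff cong_mult cong_refl IH z)
    then show ?thesis using Suc by simp
  qed
qed

lemma denom_bound:
  fixes x x' :: complex and t :: rat and nu c1 c2 p q :: int and n :: nat
  assumes s: "x + x' = of_rat t" and m: "x * x' = of_int nu" and n0: "n > 0"
    and v: "x^n + x'^n = of_int c1 / of_int c2" and c20: "c2 \<noteq> 0"
    and qt: "quotient_of t = (p, q)"
  shows "q^n dvd c2"
proof -
  have q0: "q > 0" using quotient_of_denom_pos[OF qt] .
  have tq: "t = of_int p / of_int q" using quotient_of_div[OF qt] .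
  have cop: "coprime p q" using quotient_of_coprime[OF qt] .
  have s': "x + x' = of_int p / of_int q" using s tq by (simp add: of_rat_divide)
  have W: "of_int (Wseq p (nu * q^2) n) = of_int q ^ n * (x^n + x'^n)"
    using Wseq_complex[OF s' m] q0 by simp
  then have "of_int (Wseq p (nu * q^2) n) * of_int c2 = (of_int (q^n * c1) :: complex)"
    using v c20 by (simp add: field_simps)
  then have e: "Wseq p (nu * q^2) n * c2 = q^n * c1"
    by (metis of_int_eq_iff of_int_mult)
  obtain k where nk: "n = Suc k" using n0 by (cases n) auto
  have "[Wseq p (nu * q^2) n = p ^ n] (mod q)" using Wseq_cong[of p nu q k] nk by simp
  then have "gcd (Wseq p (nu * q^2) n) q = gcd (p ^ n) q" by (rule cong_gcd_eq)
  moreover have "coprime (p ^ n) q" using cop by simp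
  ultimately have "coprime (Wseq p (nu * q^2) n) q" by (simp add: coprime_iff_gcd_eq_1)
  then have cop2: "coprime (q^n) (Wseq p (nu * q^2) n)" by (simp add: coprime_commute)
  have "q^n dvd Wseq p (nu * q^2) n * c2" using e by simp
  then show ?thesis using cop2 by (simp add: coprime_dvd_mult_right_iff)
qed


lemma real_bound1:
  fixes a :: real
  assumes "a > 0" "a * a + 1 \<ge> 3 * a"
  shows "a \<ge> 3/2 \<or> a \<le> 2/3"
proof (rule ccontr)
  assume "\<not> (a \<ge> 3/2 \<or> a \<le> 2/3)"
  then have h: "a - 2/3 > 0" "3/2 - a > 0" by auto
  have "(a - 2/3) * (3/2 - a) > 0" using h by simp
  moreover have "(a - 2/3) * (3/2 - a) = - (a * a) + 13/6 * a - 1" by (simp add: algebra_simps)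
  ultimately show False using assms by linarith
qed

lemma real_bound2:
  fixes a :: real
  assumes "a > 0" "\<bar>a * a - 1\<bar> \<ge> a"
  shows "a \<ge> 3/2 \<or> a \<le> 2/3"
proof (rule ccontr)
  assume "\<not> (a \<ge> 3/2 \<or> a \<le> 2/3)"
  then have h: "a - 2/3 > 0" "3/2 - a > 0" by auto
  have "(3/2 - a) * (a + 1/2) > 0" using h by simp
  moreover have "(3/2 - a) * (a + 1/2) = - (a * a) + a + 3/4" by (simp add: algebra_simps)
  moreover have "a * a > 2/3 * (2/3)" using h by (intro mult_strict_mono) auto
  ultimately show False using assms h by (auto simp: abs_if split: if_splits)
qed

lemma x12:
  fixes x :: complex and p nu :: int
  assumes xx: "x * x = of_int p * x - of_int nu"
    and small: "(nu = 1 \<and> \<bar>p\<bar> \<le> 2) \<or> (nu = -1 \<and> p = 0)"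
  shows "x ^ 12 = 1"
proof -
  have cases: "(nu = 1 \<and> p = 0) \<or> (nu = 1 \<and> p = 1) \<or> (nu = 1 \<and> p = -1) \<or> (nu = 1 \<and> p = 2) \<or>
     (nu = 1 \<and> p = -2) \<or> (nu = -1 \<and> p = 0)" using small by auto
  have p12: "x ^ 12 = (x * x) ^ 6" "x ^ 12 = (x * x * x) ^ 4" by (simp_all add: power_mult_distrib flip: power_add)
  from cases show ?thesis
  proof (elim disjE conjE)
    assume "nu = 1" "p = 0"
    then have "x * x = -1" using xx by simp
    then show ?thesis using p12 by simp
  next
    assume "nu = 1" "p = 1"
    then have h: "x * x = x - 1" using xx by simp
    have "x * x * x = x * (x * x)" by (simp add: mult.assoc)
    also have "\<dots> = x * (x - 1)" unfolding h ..
    also have "\<dots> = x * x - x" by (simp add: algebra_simps)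
    also have "\<dots> = -1" unfolding h by simp
    finally have "x * x * x = -1" .
    then show ?thesis using p12 by simp
  next
    assume "nu = 1" "p = -1"
    then have h: "x * x = - x - 1" using xx by simp
    have "x * x * x = x * (x * x)" by (simp add: mult.assoc)
    also have "\<dots> = x * (- x - 1)" unfolding h ..
    also have "\<dots> = - (x * x) - x" by (simp add: algebra_simps)
    also have "\<dots> = 1" unfolding h by simp
    finally have "x * x * x = 1" .
    then show ?thesis using p12 by simp
  next
    assume "nu = 1" "p = 2"
    then have "x * x = 2 * x - 1" using xx by simp
    then have "(x - 1) * (x - 1) = 0" by (simp add: algebra_simps)
    then have "x = 1" by simp
    then show ?thesis by simp
  next
    assume "nu = 1" "p = -2"
    then have "x * x = - 2 * x - 1" using xx by simp
    then have h: "x * x = - 2 * x - 1" .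
    have "(x + 1) * (x + 1) = x * x + 2 * x + 1" by (simp add: algebra_simps)
    also have "\<dots> = 0" unfolding h by simp
    finally have "(x + 1) * (x + 1) = 0" .
    then have "x = -1" by (simp add: add_eq_0_iff2)
    then show ?thesis by simp
  next
    assume "nu = -1" "p = 0"
    then have "x * x = 1" using xx by simp
    then show ?thesis using p12 by simp
  qed
qed

lemma unit_case:
  fixes x x' \<gamma> :: complex and p nu :: int and n :: nat
  assumes s: "x + x' = of_int p" and m: "x * x' = of_int nu" and nu: "nu = 1 \<or> nu = -1"
    and g: "x^n = \<gamma>" and n0: "n > 0" and nr: "\<forall>k::nat. k > 0 \<longrightarrow> \<gamma>^k \<noteq> 1"
  shows "real n \<le> 2 * cmod \<gamma> + 2 / cmod \<gamma>"
proof -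
  have x': "x' = of_int p - x" using s by (simp add: algebra_simps)
  have xx: "x * x = of_int p * x - of_int nu" using m unfolding x' by (simp add: algebra_simps)
  show ?thesis
  proof (cases "(nu = 1 \<and> \<bar>p\<bar> \<le> 2) \<or> (nu = -1 \<and> p = 0)")
    case True
    have "x ^ 12 = 1" by (rule x12[OF xx True])
    then have "\<gamma> ^ 12 = 1" unfolding g[symmetric] by (metis power_mult mult.commute power_one)
    then show ?thesis using nr by auto
  next
    case False
    define D' where "D' = p^2 - 4 * nu"
    have Dpos: "D' > 0"
    proof -
      have p9: "p^2 \<ge> 9" if "nu = 1" "\<bar>p\<bar> \<ge> 3"
      proof -
        have "\<bar>p\<bar> * \<bar>p\<bar> \<ge> 3 * 3" using that by (intro mult_mono) auto
        then show ?thesis by (simp add: power2_eq_square)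
      qed
      show ?thesis
      proof (cases "nu = 1")
        case True
        then have "\<bar>p\<bar> \<ge> 3" using False by auto
        then show ?thesis using p9[OF True] True unfolding D'_def by auto
      next
        case False
        then have "nu = -1" using nu by simp
        moreover have "p^2 \<ge> 0" by (rule zero_le_power2)
        ultimately show ?thesis unfolding D'_def by linarith
      qed
    qed
    define w where "w = sqrt (real_of_int D')"
    have w2: "w * w = real_of_int D'" using Dpos unfolding w_def by simp
    have "(2 * x - of_int p) * (2 * x - of_int p) = complex_of_real w * complex_of_real w"
    proof -
      have "(2 * x - of_int p) * (2 * x - of_int p) = 4 * (x * x) - 4 * of_int p * x + of_int p * of_int p"
        by (simp add: algebra_simps)
      also have "\<dots> = of_int p * of_int p - 4 * of_int nu" unfolding xx by (simp add: algebra_simps)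
      also have "\<dots> = of_int D'" unfolding D'_def by (simp add: power2_eq_square)
      also have "\<dots> = complex_of_real (w * w)" using w2 by simp
      finally show ?thesis by simp
    qed
    then have "2 * x - of_int p = complex_of_real w \<or> 2 * x - of_int p = - complex_of_real w"
      by (metis square_eq_iff)
    then obtain u :: real where xu: "x = complex_of_real u"
    proof (elim disjE)
      assume h: "2 * x - of_int p = complex_of_real w"
      have "x = ((2 * x - of_int p) + of_int p) / 2" by simp
      also have "\<dots> = complex_of_real ((w + real_of_int p) / 2)" unfolding h by simp
      finally show thesis by (rule that)
    next
      assume h: "2 * x - of_int p = - complex_of_real w"
      have "x = ((2 * x - of_int p) + of_int p) / 2" by simp
      also have "\<dots> = complex_of_real ((- w + real_of_int p) / 2)" unfolding h by simp
      finally show thesis by (rule that)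
    qed
    have uu: "u * u = real_of_int p * u - real_of_int nu"
    proof -
      have "complex_of_real (u * u) = complex_of_real (real_of_int p * u - real_of_int nu)"
        using xx unfolding xu by simp
      then show ?thesis by (simp only: of_real_eq_iff)
    qed
    define a where "a = \<bar>u\<bar>"
    have u0: "u \<noteq> 0" using uu nu by auto
    have a0: "a > 0" using u0 unfolding a_def by simp
    have aa: "a * a = u * u" unfolding a_def by (simp add: abs_mult_self_eq)
    have ab: "a \<ge> 3/2 \<or> a \<le> 2/3"
    proof (cases "nu = 1")
      case True
      then have p3: "\<bar>p\<bar> \<ge> 3" using False by auto
      have pu: "real_of_int p * u = u * u + 1" using uu True by simp
      have "\<bar>real_of_int p\<bar> * a = \<bar>real_of_int p * u\<bar>" unfolding a_def by (simp add: abs_mult)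
      also have "\<dots> = u * u + 1" unfolding pu by (simp add: abs_of_nonneg)
      finally have "a * a + 1 = \<bar>real_of_int p\<bar> * a" unfolding aa by simp
      also have "\<dots> \<ge> 3 * a" using p3 a0 by (intro mult_right_mono) auto
      finally show ?thesis using real_bound1 a0 by blast
    next
      case False
      then have nm: "nu = -1" using nu by simp
      then have p1: "\<bar>p\<bar> \<ge> 1" using \<open>\<not> ((nu = 1 \<and> \<bar>p\<bar> \<le> 2) \<or> (nu = -1 \<and> p = 0))\<close> by auto
      have pu: "real_of_int p * u = u * u - 1" using uu nm by simp
      have "\<bar>real_of_int p\<bar> * a = \<bar>real_of_int p * u\<bar>" unfolding a_def by (simp add: abs_mult)
      also have "\<dots> = \<bar>u * u - 1\<bar>" unfolding pu ..
      finally have "\<bar>a * a - 1\<bar> = \<bar>real_of_int p\<bar> * a" unfolding aa by simp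
      also have "\<dots> \<ge> 1 * a" using p1 a0 by (intro mult_right_mono) auto
      finally show ?thesis using real_bound2 a0 by simp
    qed
    have cg: "cmod \<gamma> = a ^ n" unfolding g[symmetric] xu a_def by (simp add: norm_power)
    have bern: "1 + real n * (1/2) \<le> (3/2 :: real) ^ n"
      using Bernoulli_inequality[of "1/2" n] by simp
    have cpos: "cmod \<gamma> > 0" using cg a0 by simp
    from ab show ?thesis
    proof
      assume "a \<ge> 3/2"
      then have "(3/2::real) ^ n \<le> a ^ n" by (intro power_mono) auto
      then have "real n \<le> 2 * cmod \<gamma>" using bern cg by simp
      moreover have "2 / cmod \<gamma> > 0" using cpos by simp
      ultimately show ?thesis by linarith
    next
      assume "a \<le> 2/3"
      then have "3/2 \<le> 1 / a" using a0 by (simp add: field_simps)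
      then have "(3/2::real) ^ n \<le> (1 / a) ^ n" by (intro power_mono) auto
      also have "\<dots> = 1 / cmod \<gamma>" using cg by (simp add: power_one_over)
      finally have "real n \<le> 2 / cmod \<gamma>" using bern by simp
      moreover have "2 * cmod \<gamma> \<ge> 0" by simp
      ultimately show ?thesis by linarith
    qed
  qed
qed


lemma ratio_repr:
  fixes a b :: complex
  assumes "a \<noteq> 0" "b \<noteq> 0"
  shows "a / b = - ((a + b)^2 + (a - b)^2) / (4 * (- (a * b))) - (a + b) * (a - b) / (2 * (- (a * b)))"
    "b / a = - ((a + b)^2 + (a - b)^2) / (4 * (- (a * b))) + (a + b) * (a - b) / (2 * (- (a * b)))"
proof -
  have P: "a * b \<noteq> 0" using assms by simp
  have e1: "- ((a + b)^2 + (a - b)^2) / (4 * (- (a * b))) = ((a + b)^2 + (a - b)^2) / (4 * (a * b))"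
    using P by (simp add: field_simps)
  have e2: "(a + b) * (a - b) / (2 * (- (a * b))) = - (2 * ((a + b) * (a - b))) / (4 * (a * b))"
    by simp
  have n1: "((a + b)^2 + (a - b)^2) + 2 * ((a + b) * (a - b)) = 4 * a * a"
    by (simp add: power2_eq_square algebra_simps)
  have n2: "((a + b)^2 + (a - b)^2) - 2 * ((a + b) * (a - b)) = 4 * b * b"
    by (simp add: power2_eq_square algebra_simps)
  have "- ((a + b)^2 + (a - b)^2) / (4 * (- (a * b))) - (a + b) * (a - b) / (2 * (- (a * b)))
        = (((a + b)^2 + (a - b)^2) + 2 * ((a + b) * (a - b))) / (4 * (a * b))"
    unfolding e1 e2 by (simp add: diff_divide_distrib add_divide_distrib)
  also have "\<dots> = a / b" unfolding n1 using assms by simp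
  finally show "a / b = - ((a + b)^2 + (a - b)^2) / (4 * (- (a * b))) - (a + b) * (a - b) / (2 * (- (a * b)))" by simp
  have "- ((a + b)^2 + (a - b)^2) / (4 * (- (a * b))) + (a + b) * (a - b) / (2 * (- (a * b)))
        = (((a + b)^2 + (a - b)^2) - 2 * ((a + b) * (a - b))) / (4 * (a * b))"
    unfolding e1 e2 by (simp add: diff_divide_distrib add_divide_distrib)
  also have "\<dots> = b / a" unfolding n2 using assms by simp
  finally show "b / a = - ((a + b)^2 + (a - b)^2) / (4 * (- (a * b))) + (a + b) * (a - b) / (2 * (- (a * b)))" by simp
qed

lemma h_pos:
  fixes a1 a2 :: int and \<alpha> \<beta> :: complex and \<Delta> :: int
  assumes a2: "a2 \<noteq> 0"
    and roots: "\<alpha> + \<beta> = of_int a1" "\<alpha> * \<beta> = - of_int a2"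
    and nr: "\<forall>n::nat. n > 0 \<longrightarrow> (\<alpha> / \<beta>) ^ n \<noteq> 1"
    and Delta: "\<Delta> = a1^2 + 4 * a2"
    and ns: "\<not> (\<exists>k::int. \<Delta> = k^2)"
  shows "(GREATEST n::nat. n > 0 \<and> (\<exists>x\<in>quad_field \<Delta>. x ^ n = \<alpha> / \<beta>)) > 0"
proof -
  define y where "y = csqrt (of_int \<Delta>)"
  have y2: "y^2 = of_int \<Delta>" unfolding y_def by simp
  define \<gamma> where "\<gamma> = \<alpha> / \<beta>"
  have ab0: "\<alpha> \<noteq> 0" "\<beta> \<noteq> 0" using roots(2) a2 by auto
  have g0: "\<gamma> \<noteq> 0" using ab0 unfolding \<gamma>_def by simp
  have u2: "(\<alpha> - \<beta>)^2 = y^2"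
  proof -
    have "(\<alpha> - \<beta>)^2 = (\<alpha> + \<beta>)^2 - 4 * (\<alpha> * \<beta>)" by (simp add: power2_eq_square algebra_simps)
    also have "\<dots> = of_int \<Delta>" unfolding roots Delta by simp
    finally show ?thesis using y2 by simp
  qed
  obtain e :: rat where e: "e = 1 \<or> e = -1" "\<alpha> - \<beta> = of_rat e * y"
  proof -
    from u2 have "\<alpha> - \<beta> = y \<or> \<alpha> - \<beta> = - y" by (simp add: power2_eq_iff)
    then show thesis
    proof
      assume "\<alpha> - \<beta> = y" then show thesis using that[of 1] by simp
    next
      assume "\<alpha> - \<beta> = - y" then show thesis using that[of "-1"] by simp
    qed
  qed
  define A0 :: rat where "A0 = - (of_int a1 ^ 2 + of_int \<Delta>) / (4 * of_int a2)"
  define B0 :: rat where "B0 = - (e * of_int a1) / (2 * of_int a2)"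
  have rA0: "(of_rat A0 :: complex) = - ((\<alpha> + \<beta>)^2 + (\<alpha> - \<beta>)^2) / (4 * (- (\<alpha> * \<beta>)))"
  proof -
    have "A0 = of_int (- (a1^2 + \<Delta>)) / of_int (4 * a2)" unfolding A0_def by simp
    then have "(of_rat A0 :: complex) = of_int (- (a1^2 + \<Delta>)) / of_int (4 * a2)"
      by (simp only: of_rat_divide of_rat_of_int_eq)
    then have "(of_rat A0 :: complex) = - (of_int a1 ^ 2 + of_int \<Delta>) / (4 * of_int a2)"
      by simp
    also have "(of_int \<Delta> :: complex) = (\<alpha> - \<beta>)^2" using u2 y2 by simp
    finally show ?thesis unfolding roots by simp
  qed
  have rB0: "(of_rat B0 :: complex) * y = - ((\<alpha> + \<beta>) * (\<alpha> - \<beta>) / (2 * (- (\<alpha> * \<beta>))))"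
  proof -
    have "(of_rat B0 :: complex) * y = - (of_int a1 * (of_rat e * y)) / (2 * of_int a2)"
      unfolding B0_def by (simp add: of_rat_divide of_rat_add of_rat_mult of_rat_minus)
    also have "of_rat e * y = \<alpha> - \<beta>" using e(2) by simp
    finally show ?thesis unfolding roots by simp
  qed
  have gA: "\<gamma> = of_rat A0 + of_rat B0 * y"
    unfolding \<gamma>_def rA0 rB0 ratio_repr(1)[OF ab0] by simp
  have gB: "\<beta> / \<alpha> = of_rat A0 - of_rat B0 * y"
    unfolding rA0 rB0 ratio_repr(2)[OF ab0] by simp
  have ginv: "\<beta> / \<alpha> = 1 / \<gamma>" unfolding \<gamma>_def by simp
  define Q where "Q = (\<lambda>n::nat. n > 0 \<and> (\<exists>x\<in>quad_field \<Delta>. x ^ n = \<alpha> / \<beta>))"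
  have Q1: "Q 1" unfolding Q_def quad_field_def using gA unfolding \<gamma>_def y_def by auto
  define N where "N = nat (2 * \<bar>a2\<bar>) + nat \<lceil>2 * cmod \<gamma> + 2 / cmod \<gamma>\<rceil>"
  have bound: "n \<le> N" if Qn: "Q n" for n
  proof -
    from Qn have n0: "n > 0" and "\<exists>x\<in>quad_field \<Delta>. x ^ n = \<gamma>" unfolding Q_def \<gamma>_def by auto
    then obtain r s where xn: "(of_rat r + of_rat s * y) ^ n = \<gamma>"
      unfolding quad_field_def y_def by auto
    define x where "x = of_rat r + of_rat s * y"
    define x' where "x' = of_rat r - of_rat s * y"
    obtain A B where AB: "x ^ n = of_rat A + of_rat B * y" "x' ^ n = of_rat A - of_rat B * y"
      using pow_conj[OF y2, of r s n] unfolding x_def x'_def by blast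
    have "of_rat A + of_rat B * y = of_rat A0 + of_rat B0 * y" using AB(1) xn gA unfolding x_def by simp
    then have "A = A0 \<and> B = B0" using qf_unique[OF y2 ns] by blast
    then have x'n: "x' ^ n = 1 / \<gamma>" using AB(2) gB ginv by simp
    have xn': "x ^ n = \<gamma>" using xn unfolding x_def .
    define nu :: rat where "nu = r^2 - s^2 * of_int \<Delta>"
    have prod: "x * x' = of_rat nu"
    proof -
      have "x * x' = of_rat r * of_rat r - of_rat s * of_rat s * (y * y)" unfolding x_def x'_def by (simp add: algebra_simps)
      also have "y * y = of_int \<Delta>" using y2 by (simp add: power2_eq_square)
      finally show ?thesis unfolding nu_def by (simp add: of_rat_diff of_rat_mult power2_eq_square)
    qed
    have "(of_rat (nu ^ n) :: complex) = (x * x') ^ n" unfolding prod by (simp add: of_rat_power)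
    also have "\<dots> = 1" unfolding power_mult_distrib xn' x'n using g0 by simp
    finally have "nu ^ n = 1" by (metis of_rat_1 of_rat_eq_iff)
    then have "\<bar>nu\<bar> ^ n = 1 ^ n" by (metis power_abs abs_one power_one)
    then have "\<bar>nu\<bar> = 1" using n0 by (subst (asm) power_eq_iff_eq_base) auto
    then obtain nui :: int where nui: "nui = 1 \<or> nui = -1" "nu = of_int nui"
      by (metis abs_if of_int_1 of_int_minus minus_equation_iff)
    have prodi: "x * x' = of_int nui" using prod nui(2) by simp
    define t :: rat where "t = 2 * r"
    have sum: "x + x' = of_rat t" unfolding x_def x'_def t_def by (simp add: of_rat_mult)
    have vsum: "x ^ n + x' ^ n = of_int (- (a1^2 + \<Delta>)) / of_int (2 * a2)"
    proof -
      have "x ^ n + x' ^ n = \<gamma> + \<beta> / \<alpha>" using xn' x'n ginv by simp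
      also have "\<dots> = (of_rat A0 + of_rat B0 * y) + (of_rat A0 - of_rat B0 * y)" using gA gB by simp
      also have "\<dots> = 2 * of_rat A0" by simp
      finally have "x ^ n + x' ^ n = 2 * of_rat A0" .
      also have "\<dots> = of_int (- (a1^2 + \<Delta>)) / of_int (2 * a2)"
      proof -
        have "A0 = of_int (- (a1^2 + \<Delta>)) / of_int (4 * a2)" unfolding A0_def by simp
        then have "(of_rat A0 :: complex) = of_int (- (a1^2 + \<Delta>)) / of_int (4 * a2)"
          by (simp only: of_rat_divide of_rat_of_int_eq)
        then show ?thesis using a2 by (simp add: field_simps)
      qed
      finally show ?thesis .
    qed
    obtain p q where pq: "quotient_of t = (p, q)" by (cases "quotient_of t")
    have q0: "q > 0" using quotient_of_denom_pos[OF pq] .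
    show "n \<le> N"
    proof (cases "q = 1")
      case True
      have "t = of_int p" using quotient_of_div[OF pq] True by simp
      then have sumi: "x + x' = of_int p" using sum by simp
      have "real n \<le> 2 * cmod \<gamma> + 2 / cmod \<gamma>"
        by (rule unit_case[OF sumi prodi nui(1) xn' n0]) (use nr in \<open>simp add: \<gamma>_def\<close>)
      then have "real n \<le> real (nat \<lceil>2 * cmod \<gamma> + 2 / cmod \<gamma>\<rceil>)" by linarith
      then show ?thesis unfolding N_def by linarith
    next
      case False
      then have q2: "q \<ge> 2" using q0 by simp
      have "q ^ n dvd 2 * a2" using denom_bound[OF sum prodi n0 vsum _ pq] a2 by simp
      then have "\<bar>q ^ n\<bar> \<le> \<bar>2 * a2\<bar>" using a2 by (intro dvd_imp_le_int) auto
      moreover have "(2::int) ^ n \<le> q ^ n" using q2 by (intro power_mono) auto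
      moreover have "int n < 2 ^ n" using less_exp[of n] by (metis of_nat_less_iff of_nat_numeral of_nat_power)
      moreover have "\<bar>q ^ n\<bar> = q ^ n" using q0 by simp
      moreover have "\<bar>2 * a2\<bar> = 2 * \<bar>a2\<bar>" by (simp add: abs_mult)
      ultimately have "int n < 2 * \<bar>a2\<bar>" by linarith
      then show ?thesis unfolding N_def by linarith
    qed
  qed
  have "Q (Greatest Q)" by (rule GreatestI_nat[of Q 1 N, OF Q1 bound])
  then show ?thesis unfolding Q_def by simp
qed

lemma has_sum_PiE_prod_nonneg:
  fixes f :: "'a \<Rightarrow> 'b \<Rightarrow> real"
  assumes "finite A"
    and "\<And>x. x \<in> A \<Longrightarrow> (f x has_sum s x) (B x)"
    and "\<And>x y. x \<in> A \<Longrightarrow> y \<in> B x \<Longrightarrow> f x y \<ge> 0"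
  shows "((\<lambda>g. \<Prod>x\<in>A. f x (g x)) has_sum (\<Prod>x\<in>A. s x)) (PiE A B)"
  using assms
proof (induction A rule: finite_induct)
  case empty
  then show ?case by (simp add: has_sum_finiteI)
next
  case (insert x F)
  have pi: "PiE (insert x F) B = (\<lambda>(g,y). g(x:=y)) ` (PiE F B \<times> B x)"
    unfolding PiE_insert_eq by (subst swap_product [symmetric]) (simp add: image_image case_prod_unfold)
  have inj: "inj_on (\<lambda>(g, y). g(x := y)) (PiE F B \<times> B x)"
    using \<open>x \<notin> F\<close> by (rule inj_combinator')
  let ?P = "\<lambda>g. \<Prod>z\<in>F. f z (g z)"
  have IH: "(?P has_sum (\<Prod>z\<in>F. s z)) (PiE F B)" using insert by auto
  have nonneg: "?P g \<ge> 0" if "g \<in> PiE F B" for g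
    using insert.prems(2) that by (auto intro!: prod_nonneg)
  have inner: "((\<lambda>y. (\<lambda>(g,y). f x y * ?P g) (g,y)) has_sum (s x * ?P g)) (B x)" for g
    using has_sum_cmult_left[OF insert.prems(1)[of x]] by auto
  have outer: "((\<lambda>g. s x * ?P g) has_sum (s x * (\<Prod>z\<in>F. s z))) (PiE F B)"
    by (rule has_sum_cmult_right[OF IH])
  have summ: "(\<lambda>(g,y). f x y * ?P g) summable_on (PiE F B \<times> B x)"
    by (rule summable_on_SigmaI[OF inner]) (use outer nonneg insert.prems(2) in \<open>auto simp: summable_on_def\<close>)
  have S: "((\<lambda>(g,y). f x y * ?P g) has_sum (s x * (\<Prod>z\<in>F. s z))) (PiE F B \<times> B x)"
    by (rule has_sum_SigmaI[OF inner outer summ])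
  have eq: "((\<lambda>g. \<Prod>z\<in>insert x F. f z (g z)) \<circ> (\<lambda>(g,y). g(x:=y))) gy = (\<lambda>(g,y). f x y * ?P g) gy"
    if "gy \<in> PiE F B \<times> B x" for gy
  proof -
    obtain g y where gy: "gy = (g,y)" by (cases gy)
    have "(\<Prod>z\<in>F. f z ((g(x:=y)) z)) = ?P g"
      by (rule prod.cong) (use insert.hyps in auto)
    then show ?thesis using insert.hyps by (simp add: gy)
  qed
  have "(((\<lambda>g. \<Prod>z\<in>insert x F. f z (g z)) \<circ> (\<lambda>(g,y). g(x:=y))) has_sum (s x * (\<Prod>z\<in>F. s z))) (PiE F B \<times> B x)"
    using S eq by (subst has_sum_cong) auto
  then have "((\<lambda>g. \<Prod>z\<in>insert x F. f z (g z)) has_sum (s x * (\<Prod>z\<in>F. s z))) (PiE (insert x F) B)"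
    unfolding pi using has_sum_reindex[OF inj] by blast
  then show ?case using insert.hyps by simp
qed

lemma prod_prime_factors_superset:
  fixes n :: nat
  assumes "n > 0" "finite P" "prime_factors n \<subseteq> P" "\<And>p. p \<in> P \<Longrightarrow> prime p"
  shows "n = (\<Prod>p\<in>P. p ^ multiplicity p n)"
proof -
  have "n = (\<Prod>p\<in>prime_factors n. p ^ multiplicity p n)"
    using assms(1) by (rule prime_factorization_nat)
  also have "\<dots> = (\<Prod>p\<in>P. p ^ multiplicity p n)"
  proof (rule prod.mono_neutral_left[OF assms(2) assms(3)])
    show "\<forall>i\<in>P - prime_factors n. i ^ multiplicity i n = 1"
    proof
      fix i assume "i \<in> P - prime_factors n"
      then have "\<not> i dvd n" using assms(1,4) by (auto simp: in_prime_factors_iff)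
      then have "multiplicity i n = 0" by (rule not_dvd_imp_multiplicity_0)
      then show "i ^ multiplicity i n = 1" by simp
    qed
  qed
  finally show ?thesis .
qed

lemma multiplicity_prod_primes_set:
  fixes T :: "nat set"
  assumes "finite T" "\<And>p. p \<in> T \<Longrightarrow> prime p" "prime q"
  shows "multiplicity q (\<Prod>T) = (if q \<in> T then 1 else 0)"
proof -
  have "\<Prod>T = (\<Prod>p\<in>T. p ^ (1::nat))" by simp
  then show ?thesis using multiplicity_prod_prime_powers[OF assms, of "\<lambda>_. 1"] by simp
qed

lemma prime_factors_prod_pp:
  fixes P :: "nat set"
  assumes "finite P" "\<And>p. p \<in> P \<Longrightarrow> prime p"
  shows "prime_factors (\<Prod>p\<in>P. p ^ f p) \<subseteq> P"
proof
  fix q assume q: "q \<in> prime_factors (\<Prod>p\<in>P. p ^ f p)"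
  have pos: "(\<Prod>p\<in>P. p ^ f p) > 0" using assms(2) by (auto intro!: prod_pos simp: prime_gt_0_nat)
  from q have "prime q" "multiplicity q (\<Prod>p\<in>P. p ^ f p) > 0"
    using pos by (auto simp: prime_factors_multiplicity)
  then show "q \<in> P" using multiplicity_prod_prime_powers[OF assms, of q f] by (auto split: if_splits)
qed

lemma dinf_gcd_eq:
  fixes d h :: nat
  assumes "d > 0" "h > 0"
  shows "dinf_gcd d h = (\<Prod>p\<in>prime_factors d. p ^ multiplicity p h)"
proof -
  let ?P = "prime_factors d"
  let ?M = "\<Prod>p\<in>?P. p ^ multiplicity p h"
  have fin: "finite ?P" by simp
  have pr: "\<And>p. p \<in> ?P \<Longrightarrow> prime p" by auto
  have Mpos: "?M > 0" by (auto intro!: prod_pos prime_gt_0_nat dest: in_prime_factors_imp_prime)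
  have multM: "multiplicity q ?M = (if q \<in> ?P then multiplicity q h else 0)" if "prime q" for q
    using multiplicity_prod_prime_powers[OF fin pr that] by simp
  have MP: "?M dvd h \<and> (\<forall>p. prime p \<and> p dvd ?M \<longrightarrow> p dvd d)"
  proof
    show "?M dvd h"
      by (rule multiplicity_le_imp_dvd) (use Mpos multM in auto)
    show "\<forall>p. prime p \<and> p dvd ?M \<longrightarrow> p dvd d"
    proof (intro allI impI)
      fix p assume p: "prime p \<and> p dvd ?M"
      then have "p \<in> prime_factors ?M" using Mpos by (auto simp: in_prime_factors_iff)
      moreover have "prime_factors ?M \<subseteq> ?P" by (rule prime_factors_prod_pp) auto
      ultimately have "p \<in> ?P" by blast
      then show "p dvd d" by auto
    qed
  qed
  have le: "g \<le> ?M" if g: "g dvd h \<and> (\<forall>p. prime p \<and> p dvd g \<longrightarrow> p dvd d)" for g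
  proof -
    have g0: "g \<noteq> 0" using g assms(2) by auto
    have "g dvd ?M"
    proof (rule multiplicity_le_imp_dvd[OF g0])
      fix q :: nat assume q: "prime q"
      show "multiplicity q g \<le> multiplicity q ?M"
      proof (cases "q \<in> ?P")
        case True
        then show ?thesis using multM[OF q] g assms(2)
          by (simp add: dvd_imp_multiplicity_le)
      next
        case False
        then have "\<not> q dvd g" using g q assms(1) by (auto simp: in_prime_factors_iff)
        then show ?thesis by (simp add: not_dvd_imp_multiplicity_0)
      qed
    qed
    then show ?thesis using Mpos by (simp add: dvd_imp_le)
  qed
  show ?thesis unfolding dinf_gcd_def
    by (rule Greatest_equality) (use MP le in auto)
qed

definition Sd :: "nat \<Rightarrow> nat set" where
  "Sd d = {v::nat. v > 0 \<and> (\<forall>p. prime p \<and> p dvd v \<longrightarrow> p dvd d)}"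

lemma Sd_prime_factors: "v \<in> Sd d \<Longrightarrow> d > 0 \<Longrightarrow> prime_factors v \<subseteq> prime_factors d"
  unfolding Sd_def by (auto simp: in_prime_factors_iff)

lemma gcd_ratio:
  fixes d h m :: nat
  assumes "d > 0" "h > 0" "m \<in> Sd d"
  shows "real (gcd m h) / real m =
    (\<Prod>p\<in>prime_factors d. real p ^ min (multiplicity p m) (multiplicity p h) / real p ^ multiplicity p m)"
proof -
  let ?P = "prime_factors d"
  have m0: "m > 0" using assms(3) by (simp add: Sd_def)
  have g0: "gcd m h > 0" using m0 by simp
  have pm: "prime_factors m \<subseteq> ?P" using Sd_prime_factors[OF assms(3,1)] .
  have pg: "prime_factors (gcd m h) \<subseteq> ?P"
    using pm g0 m0 by (auto simp: in_prime_factors_iff intro: dvd_trans)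
  have m_eq: "m = (\<Prod>p\<in>?P. p ^ multiplicity p m)"
    by (rule prod_prime_factors_superset[OF m0 _ pm]) auto
  have g_eq: "gcd m h = (\<Prod>p\<in>?P. p ^ multiplicity p (gcd m h))"
    by (rule prod_prime_factors_superset[OF g0 _ pg]) auto
  also have "\<dots> = (\<Prod>p\<in>?P. p ^ min (multiplicity p m) (multiplicity p h))"
    by (rule prod.cong) (use m0 assms(2) in \<open>auto dest!: in_prime_factors_imp_prime simp: multiplicity_gcd\<close>)
  finally have g_eq': "gcd m h = \<dots>" .
  have "real (gcd m h) / real m = (\<Prod>p\<in>?P. real p ^ min (multiplicity p m) (multiplicity p h)) / (\<Prod>p\<in>?P. real p ^ multiplicity p m)"
    by (subst g_eq', subst (2) m_eq) simp
  also have "\<dots> = (\<Prod>p\<in>?P. real p ^ min (multiplicity p m) (multiplicity p h) / real p ^ multiplicity p m)"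
    by (rule prod_dividef[symmetric])
  finally show ?thesis .
qed

lemma totient_Sd:
  assumes "d > 0" "v \<in> Sd d"
  shows "real (totient (d * v)) = real d * real v * (\<Prod>p\<in>prime_factors d. 1 - 1 / real p)"
proof -
  have v0: "v > 0" using assms(2) by (simp add: Sd_def)
  have "prime_factors (d * v) = prime_factors d \<union> prime_factors v"
    using assms(1) v0 by (simp add: prime_factors_product)
  also have "\<dots> = prime_factors d" using Sd_prime_factors[OF assms(2,1)] by blast
  finally show ?thesis by (simp add: totient_formula2)
qed

lemma prod_primes_facts:
  fixes T :: "nat set"
  assumes "finite T" "\<And>p. p \<in> T \<Longrightarrow> prime p"
  shows "\<Prod>T > 0" "prime_factors (\<Prod>T) = T" "squarefree (\<Prod>T)"
proof -
  show pos: "\<Prod>T > 0" using assms by (auto intro!: prod_pos prime_gt_0_nat)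
  have m: "multiplicity q (\<Prod>T) = (if q \<in> T then 1 else 0)" if "prime q" for q
    using multiplicity_prod_primes_set[OF assms that] .
  show pf: "prime_factors (\<Prod>T) = T"
  proof (intro equalityI subsetI)
    fix q assume "q \<in> prime_factors (\<Prod>T)"
    then have "prime q" "multiplicity q (\<Prod>T) > 0" using pos by (auto simp: prime_factors_multiplicity)
    then show "q \<in> T" using m by (auto split: if_splits)
  next
    fix q assume "q \<in> T"
    then have "prime q" "multiplicity q (\<Prod>T) > 0" using m assms(2) by auto
    then show "q \<in> prime_factors (\<Prod>T)" using pos by (auto simp: prime_factors_multiplicity)
  qed
  show "squarefree (\<Prod>T)"
    using pos pf m assms(2) by (subst squarefree_factorial_semiring') auto
qed

lemma squarefree_prod_pf:
  fixes a :: nat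
  assumes "a > 0" "squarefree a"
  shows "\<Prod>(prime_factors a) = a"
proof -
  have "a = (\<Prod>p\<in>prime_factors a. p ^ multiplicity p a)" using assms(1) by (rule prime_factorization_nat)
  also have "\<dots> = (\<Prod>p\<in>prime_factors a. p)"
    using assms squarefree_factorial_semiring'[of a] by (intro prod.cong) auto
  finally show ?thesis by simp
qed

lemma moebius_sum_subsets:
  fixes d :: nat and X :: "nat \<Rightarrow> real"
  assumes "d > 0"
  shows "(\<Sum>a | a dvd d. real_of_int (moebius_mu a) * X a) =
         (\<Sum>T\<in>Pow (prime_factors d). (-1)^card T * X (\<Prod>T))"
proof -
  let ?P = "prime_factors d"
  let ?Q = "{a. a dvd d \<and> squarefree a}"
  have fin: "finite {a. a dvd d}" using assms by (simp add: finite_divisors_nat)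
  have "(\<Sum>a | a dvd d. real_of_int (moebius_mu a) * X a) = (\<Sum>a\<in>?Q. real_of_int (moebius_mu a) * X a)"
    by (rule sum.mono_neutral_right[OF fin]) (auto simp: moebius_mu_def)
  also have "\<dots> = (\<Sum>T\<in>Pow ?P. real_of_int (moebius_mu (\<Prod>T)) * X (\<Prod>T))"
  proof (rule sum.reindex_bij_betw[symmetric])
    show "bij_betw Prod (Pow ?P) ?Q"
    proof (rule bij_betwI[where g = prime_factors])
      show "Prod \<in> Pow ?P \<rightarrow> ?Q"
      proof
        fix T assume T: "T \<in> Pow ?P"
        then have fT: "finite T" by (meson PowD finite_set_mset finite_subset)
        have pT: "\<And>p. p \<in> T \<Longrightarrow> prime p" using T by auto
        note F = prod_primes_facts[OF fT pT]
        have "\<Prod>T dvd d"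
        proof (rule multiplicity_le_imp_dvd)
          show "\<Prod>T \<noteq> 0" using F by simp
          fix q :: nat assume q: "prime q"
          show "multiplicity q (\<Prod>T) \<le> multiplicity q d"
          proof (cases "q \<in> T")
            case True
            then have "q \<in> ?P" using T by auto
            then have "multiplicity q d > 0" using assms by (auto simp: prime_factors_multiplicity)
            then show ?thesis using multiplicity_prod_primes_set[OF fT pT q] True by simp
          next
            case False
            then show ?thesis using multiplicity_prod_primes_set[OF fT pT q] by simp
          qed
        qed
        then show "\<Prod>T \<in> ?Q" using F by auto
      qed
      show "prime_factors \<in> ?Q \<rightarrow> Pow ?P"
        using assms by (auto simp: in_prime_factors_iff intro: dvd_trans)
      show "prime_factors (\<Prod>T) = T" if "T \<in> Pow ?P" for T
        using that by (intro prod_primes_facts(2)) (auto intro: finite_subset)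
      show "\<Prod>(prime_factors a) = a" if "a \<in> ?Q" for a
        using that assms by (intro squarefree_prod_pf) (auto intro: Nat.gr0I)
    qed
  qed
  also have "\<dots> = (\<Sum>T\<in>Pow ?P. (-1)^card T * X (\<Prod>T))"
  proof (rule sum.cong[OF refl])
    fix T assume T: "T \<in> Pow ?P"
    then have fT: "finite T" by (auto intro: finite_subset)
    have pT: "\<And>p. p \<in> T \<Longrightarrow> prime p" using T by auto
    note F = prod_primes_facts[OF fT pT]
    show "real_of_int (moebius_mu (\<Prod>T)) * X (\<Prod>T) = (-1)^card T * X (\<Prod>T)"
      using F by (simp add: moebius_mu_def)
  qed
  finally show ?thesis .
qed

lemma subsets_prod_diff:
  fixes P :: "'a set" and G :: "'a \<Rightarrow> nat \<Rightarrow> real" and m :: "'a \<Rightarrow> nat"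
  assumes "finite P"
  shows "(\<Sum>T\<in>Pow P. (-1)^card T * (\<Prod>p\<in>P. G p (m p + (if p \<in> T then 1 else 0)))) =
         (\<Prod>p\<in>P. G p (m p) - G p (m p + 1))"
proof -
  have "(\<Prod>p\<in>P. G p (m p) - G p (m p + 1)) = (\<Prod>p\<in>P. (- G p (m p + 1)) + G p (m p))" by simp
  also have "\<dots> = (\<Sum>X\<in>Pow P. (\<Prod>p\<in>X. - G p (m p + 1)) * (\<Prod>p\<in>P-X. G p (m p)))"
    by (rule prod_add[OF assms])
  also have "\<dots> = (\<Sum>T\<in>Pow P. (-1)^card T * (\<Prod>p\<in>P. G p (m p + (if p \<in> T then 1 else 0))))"
  proof (rule sum.cong[OF refl])
    fix X assume X: "X \<in> Pow P"
    then have XP: "X \<subseteq> P" by auto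
    have "(\<Prod>p\<in>P. G p (m p + (if p \<in> X then 1 else 0))) =
          (\<Prod>p\<in>P-X. G p (m p + (if p \<in> X then 1 else 0))) * (\<Prod>p\<in>X. G p (m p + (if p \<in> X then 1 else 0)))"
      by (rule prod.subset_diff[OF XP assms])
    also have "\<dots> = (\<Prod>p\<in>P-X. G p (m p)) * (\<Prod>p\<in>X. G p (m p + 1))"
      by (intro arg_cong2[where f = "(*)"] prod.cong) auto
    finally have e1: "(\<Prod>p\<in>P. G p (m p + (if p \<in> X then 1 else 0))) = (\<Prod>p\<in>P-X. G p (m p)) * (\<Prod>p\<in>X. G p (m p + 1))" .
    have e2: "(\<Prod>p\<in>X. - G p (m p + 1)) = (-1)^card X * (\<Prod>p\<in>X. G p (m p + 1))"
    proof -
      have "(\<Prod>p\<in>X. - G p (m p + 1)) = (\<Prod>p\<in>X. (-1) * G p (m p + 1))" by simp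
      also have "\<dots> = (\<Prod>p\<in>X. (-1::real)) * (\<Prod>p\<in>X. G p (m p + 1))" by (rule prod.distrib)
      finally show ?thesis by simp
    qed
    show "(\<Prod>p\<in>X. - G p (m p + 1)) * (\<Prod>p\<in>P-X. G p (m p)) =
          (-1)^card X * (\<Prod>p\<in>P. G p (m p + (if p \<in> X then 1 else 0)))"
      unfolding e1 e2 by (simp add: algebra_simps)
  qed
  finally show ?thesis by simp
qed

definition Gf :: "nat \<Rightarrow> nat \<Rightarrow> nat \<Rightarrow> real" where
  "Gf p k j = real p ^ min j k / real p ^ j"

definition tf :: "nat \<Rightarrow> nat \<Rightarrow> nat \<Rightarrow> nat \<Rightarrow> real" where
  "tf p e k j = (Gf p k j - Gf p k (j+1)) / (real p ^ e * real p ^ j * (1 - 1 / real p))"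

lemma tf_eq:
  assumes "prime p"
  shows "tf p e k j = (if j < k then 0 else real p ^ k / real p ^ e * (1 / (real p)^2) ^ j)"
proof -
  have p2: "real p \<ge> 2" using prime_ge_2_nat[OF assms] by simp
  have p0: "real p > 0" "real p \<noteq> 0" "1 - 1 / real p \<noteq> 0" using p2 by auto
  show ?thesis
  proof (cases "j < k")
    case True
    then have "min j k = j" "min (Suc j) k = Suc j" by auto
    then show ?thesis using True p0 by (simp add: tf_def Gf_def)
  next
    case False
    then have m: "min j k = k" "min (Suc j) k = k" by auto
    have "tf p e k j = (real p ^ k / real p ^ j - real p ^ k / real p ^ (j+1)) / (real p ^ e * real p ^ j * (1 - 1 / real p))"
      by (simp add: tf_def Gf_def m)
    also have "real p ^ k / real p ^ j - real p ^ k / real p ^ (j+1) = real p ^ k / real p ^ j * (1 - 1 / real p)"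
      using p0 by (simp add: field_simps)
    also have "real p ^ k / real p ^ j * (1 - 1 / real p) / (real p ^ e * real p ^ j * (1 - 1 / real p)) =
               real p ^ k / real p ^ e * (1 / (real p)^2) ^ j"
      using p0 by (simp add: field_simps power_mult_distrib flip: power_mult power_add) (simp add: mult_2_right power_add)
    finally show ?thesis using False by simp
  qed
qed

lemma tf_nonneg: "prime p \<Longrightarrow> tf p e k j \<ge> 0"
  by (subst tf_eq) auto

lemma tf_has_sum:
  assumes "prime p"
  shows "(tf p e k has_sum (inverse (real p ^ e * real p ^ k) * inverse (1 - 1 / (real p)^2))) UNIV"
proof -
  have p2: "real p \<ge> 2" using prime_ge_2_nat[OF assms] by simp
  define x where "x = 1 / (real p)^2"
  define c where "c = real p ^ k / real p ^ e"
  have "1 < real p * real p" by (rule less_1_mult) (use p2 in auto)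
  then have x: "norm x < 1" "x \<ge> 0" unfolding x_def by (auto simp: power2_eq_square)
  have g: "((\<lambda>i. x ^ i) has_sum (1 / (1 - x))) UNIV"
  proof (rule norm_summable_imp_has_sum)
    show "summable (\<lambda>i. norm (x ^ i))" using x by (simp add: norm_power summable_geometric)
    show "(\<lambda>i. x ^ i) sums (1 / (1 - x))" using geometric_sums[OF x(1)] by simp
  qed
  have g2: "((\<lambda>i. c * x ^ k * x ^ i) has_sum (c * x ^ k * (1 / (1 - x)))) UNIV"
    by (rule has_sum_cmult_right[OF g])
  have g3: "((\<lambda>j. c * x ^ j) has_sum (c * x ^ k * (1 / (1 - x)))) {k..}"
  proof -
    have "((\<lambda>i. c * x ^ k * x ^ i) has_sum (c * x ^ k * (1 / (1 - x)))) UNIV =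
          ((\<lambda>j. c * x ^ j) has_sum (c * x ^ k * (1 / (1 - x)))) {k..}"
      by (rule has_sum_reindex_bij_witness[of _ "\<lambda>j. j - k" "\<lambda>i. i + k"]) (auto simp: power_add)
    then show ?thesis using g2 by simp
  qed
  have g4: "(tf p e k has_sum (c * x ^ k * (1 / (1 - x)))) UNIV"
  proof -
    have "(tf p e k has_sum (c * x ^ k * (1 / (1 - x)))) UNIV = ((\<lambda>j. c * x ^ j) has_sum (c * x ^ k * (1 / (1 - x)))) {k..}"
      by (rule has_sum_cong_neutral) (auto simp: tf_eq[OF assms] c_def x_def)
    then show ?thesis using g3 by simp
  qed
  have "c * x ^ k * (1 / (1 - x)) = inverse (real p ^ e * real p ^ k) * inverse (1 - 1 / (real p)^2)"
  proof -
    have e1: "x ^ k = 1 / (real p ^ k)^2" unfolding x_def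
      by (simp add: power_one_over power_mult[symmetric] mult.commute)
    have e2: "c * (1 / (real p ^ k)^2) = inverse (real p ^ e * real p ^ k)"
      unfolding c_def using p2 by (simp add: field_simps power2_eq_square)
    show ?thesis unfolding e1 e2 by (simp add: x_def divide_inverse)
  qed
  then show ?thesis using g4 by simp
qed

lemma f_Sd:
  fixes d h v :: nat
  assumes d0: "d > 0" and h0: "h > 0" and v: "v \<in> Sd d"
  shows "(\<Sum>a | a dvd d. real_of_int (moebius_mu a) * (real (gcd (a * v) h) / (real (totient (d * v)) * real (a * v))))
       = (\<Prod>p\<in>prime_factors d. tf p (multiplicity p d) (multiplicity p h) (multiplicity p v))"
proof -
  let ?P = "prime_factors d"
  let ?phi = "real (totient (d * v))"
  let ?G = "\<lambda>p j. Gf p (multiplicity p h) j"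
  let ?m = "\<lambda>p. multiplicity p v"
  have v0: "v > 0" using v by (simp add: Sd_def)
  have finP: "finite ?P" by simp
  have phi_eq: "?phi = (\<Prod>p\<in>?P. real p ^ multiplicity p d * real p ^ ?m p * (1 - 1 / real p))"
  proof -
    have dd: "d = (\<Prod>p\<in>?P. p ^ multiplicity p d)" using d0 by (rule prime_factorization_nat)
    have vv: "v = (\<Prod>p\<in>?P. p ^ ?m p)"
      by (rule prod_prime_factors_superset[OF v0 finP Sd_prime_factors[OF v d0]]) auto
    have dr: "real d = (\<Prod>p\<in>?P. real p ^ multiplicity p d)"
      using arg_cong[OF dd, of real] by (simp only: of_nat_prod of_nat_power)
    have vr: "real v = (\<Prod>p\<in>?P. real p ^ ?m p)"
      using arg_cong[OF vv, of real] by (simp only: of_nat_prod of_nat_power)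
    have "?phi = real d * real v * (\<Prod>p\<in>?P. 1 - 1 / real p)" by (rule totient_Sd[OF d0 v])
    also have "\<dots> = (\<Prod>p\<in>?P. real p ^ multiplicity p d) * (\<Prod>p\<in>?P. real p ^ ?m p) * (\<Prod>p\<in>?P. 1 - 1 / real p)"
      by (simp only: dr vr)
    also have "\<dots> = (\<Prod>p\<in>?P. real p ^ multiplicity p d * real p ^ ?m p * (1 - 1 / real p))"
      by (simp add: prod.distrib)
    finally show ?thesis .
  qed
  have key: "real (gcd (\<Prod>T * v) h) / (?phi * real (\<Prod>T * v)) =
             (1 / ?phi) * (\<Prod>p\<in>?P. ?G p (?m p + (if p \<in> T then 1 else 0)))"
    if T: "T \<in> Pow ?P" for T
  proof -
    have fT: "finite T" using T by (auto intro: finite_subset)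
    have pT: "\<And>p. p \<in> T \<Longrightarrow> prime p" using T by auto
    note F = prod_primes_facts[OF fT pT]
    have mS: "\<Prod>T * v \<in> Sd d"
      unfolding Sd_def
    proof (intro CollectI conjI allI impI)
      show "\<Prod>T * v > 0" using F v0 by simp
      fix q assume q: "prime q \<and> q dvd \<Prod>T * v"
      then have "q dvd \<Prod>T \<or> q dvd v" using prime_dvd_multD[of q "\<Prod>T" v] by simp
      then show "q dvd d"
      proof
        assume "q dvd \<Prod>T"
        then have "q \<in> prime_factors (\<Prod>T)" using q F(1) by (simp add: in_prime_factors_iff)
        then have "q \<in> T" using F(2) by simp
        then have "q \<in> ?P" using T by blast
        then show ?thesis by (simp add: in_prime_factors_iff)
      next
        assume "q dvd v" then show ?thesis using q v by (auto simp: Sd_def)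
      qed
    qed
    have mult: "multiplicity p (\<Prod>T * v) = ?m p + (if p \<in> T then 1 else 0)" if "p \<in> ?P" for p
    proof -
      have pp: "prime p" using that by auto
      have "multiplicity p (\<Prod>T * v) = multiplicity p (\<Prod>T) + multiplicity p v"
        using F v0 pp by (intro prime_elem_multiplicity_mult_distrib) auto
      then show ?thesis using multiplicity_prod_primes_set[OF fT pT pp] by simp
    qed
    have "real (gcd (\<Prod>T * v) h) / (?phi * real (\<Prod>T * v)) = (1 / ?phi) * (real (gcd (\<Prod>T * v) h) / real (\<Prod>T * v))"
      by simp
    also have "real (gcd (\<Prod>T * v) h) / real (\<Prod>T * v) = (\<Prod>p\<in>?P. ?G p (?m p + (if p \<in> T then 1 else 0)))"
      unfolding gcd_ratio[OF d0 h0 mS] Gf_def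
      by (rule prod.cong[OF refl]) (simp only: mult)
    finally show ?thesis .
  qed
  have "(\<Sum>a | a dvd d. real_of_int (moebius_mu a) * (real (gcd (a * v) h) / (?phi * real (a * v))))
        = (\<Sum>T\<in>Pow ?P. (-1)^card T * (real (gcd (\<Prod>T * v) h) / (?phi * real (\<Prod>T * v))))"
    by (rule moebius_sum_subsets[OF d0])
  also have "\<dots> = (\<Sum>T\<in>Pow ?P. (1 / ?phi) * ((-1)^card T * (\<Prod>p\<in>?P. ?G p (?m p + (if p \<in> T then 1 else 0)))))"
  proof (rule sum.cong[OF refl])
    fix T assume T: "T \<in> Pow ?P"
    show "(-1)^card T * (real (gcd (\<Prod>T * v) h) / (?phi * real (\<Prod>T * v))) =
          (1 / ?phi) * ((-1)^card T * (\<Prod>p\<in>?P. ?G p (?m p + (if p \<in> T then 1 else 0))))"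
      unfolding key[OF T] by (rule mult.left_commute)
  qed
  also have "\<dots> = (1 / ?phi) * (\<Sum>T\<in>Pow ?P. (-1)^card T * (\<Prod>p\<in>?P. ?G p (?m p + (if p \<in> T then 1 else 0))))"
    by (simp add: sum_distrib_left)
  also have "\<dots> = (1 / ?phi) * (\<Prod>p\<in>?P. ?G p (?m p) - ?G p (?m p + 1))"
    by (simp only: subsets_prod_diff[OF finP, of ?G ?m])
  also have "(1 / ?phi) * (\<Prod>p\<in>?P. ?G p (?m p) - ?G p (?m p + 1)) = (1 / (\<Prod>p\<in>?P. real p ^ multiplicity p d * real p ^ ?m p * (1 - 1 / real p))) * (\<Prod>p\<in>?P. ?G p (?m p) - ?G p (?m p + 1))"
    by (simp only: phi_eq)
  also have "(1 / (\<Prod>p\<in>?P. real p ^ multiplicity p d * real p ^ ?m p * (1 - 1 / real p))) * (\<Prod>p\<in>?P. ?G p (?m p) - ?G p (?m p + 1))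
     = (\<Prod>p\<in>?P. tf p (multiplicity p d) (multiplicity p h) (?m p))"
  proof -
    let ?N = "\<lambda>p. ?G p (?m p) - ?G p (?m p + 1)"
    let ?D = "\<lambda>p. real p ^ multiplicity p d * real p ^ ?m p * (1 - 1 / real p)"
    have "(1 / (\<Prod>p\<in>?P. ?D p)) * (\<Prod>p\<in>?P. ?N p) = (\<Prod>p\<in>?P. ?N p) / (\<Prod>p\<in>?P. ?D p)"
      by simp
    also have "\<dots> = (\<Prod>p\<in>?P. ?N p / ?D p)" by (rule prod_dividef[symmetric])
    also have "\<dots> = (\<Prod>p\<in>?P. tf p (multiplicity p d) (multiplicity p h) (?m p))"
      by (rule prod.cong[OF refl]) (simp add: tf_def)
    finally show ?thesis .
  qed
  finally show ?thesis .
qed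


lemma prod_inverse_real: "(\<Prod>x\<in>A. inverse (f x :: real)) = inverse (\<Prod>x\<in>A. f x)"
  using prod_inversef[of f A] by (simp add: comp_def)

lemma core_has_sum:
  fixes d h :: nat
  assumes d0: "d > 0" and h0: "h > 0"
  shows "((\<lambda>v. \<Sum>a | a dvd d. real_of_int (moebius_mu a) * (real (gcd (a * v) h) / (real (totient (d * v)) * real (a * v))))
          has_sum (1 / real d * (1 / real (dinf_gcd d h)) * (\<Prod>p\<in>prime_factors d. inverse (1 - 1 / (real p)^2)))) (Sd d)"
proof -
  let ?P = "prime_factors d"
  let ?f = "\<lambda>v. \<Sum>a | a dvd d. real_of_int (moebius_mu a) * (real (gcd (a * v) h) / (real (totient (d * v)) * real (a * v)))"
  define E where "E = (\<lambda>g. \<Prod>p\<in>?P. p ^ g p)"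
  have finP: "finite ?P" by simp
  have prP: "\<And>p. p \<in> ?P \<Longrightarrow> prime p" by auto
  have Epos: "E g > 0" for g unfolding E_def by (auto intro!: prod_pos prime_gt_0_nat dest: in_prime_factors_imp_prime)
  have Emult: "multiplicity p (E g) = g p" if "p \<in> ?P" for p g
    using multiplicity_prod_prime_powers[OF finP prP, of p g] that unfolding E_def by auto
  have bij: "bij_betw E (PiE ?P (\<lambda>_. UNIV :: nat set)) (Sd d)"
  proof (rule bij_betwI[where g = "\<lambda>v. restrict (\<lambda>p. multiplicity p v) ?P"])
    show "E \<in> PiE ?P (\<lambda>_. UNIV :: nat set) \<rightarrow> Sd d"
    proof
      fix g assume "g \<in> PiE ?P (\<lambda>_. UNIV :: nat set)"
      have pf: "prime_factors (E g) \<subseteq> ?P" unfolding E_def by (rule prime_factors_prod_pp) auto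
      show "E g \<in> Sd d" unfolding Sd_def
      proof (intro CollectI conjI allI impI)
        show "E g > 0" by (rule Epos)
        fix q assume q: "prime q \<and> q dvd E g"
        then have "q \<in> prime_factors (E g)" using Epos[of g] by (simp add: in_prime_factors_iff)
        then have "q \<in> ?P" using pf by blast
        then show "q dvd d" by (simp add: in_prime_factors_iff)
      qed
    qed
    show "(\<lambda>v. restrict (\<lambda>p. multiplicity p v) ?P) \<in> Sd d \<rightarrow> PiE ?P (\<lambda>_. UNIV :: nat set)" by auto
    show "restrict (\<lambda>p. multiplicity p (E g)) ?P = g" if g: "g \<in> PiE ?P (\<lambda>_. UNIV :: nat set)" for g
    proof
      fix p show "restrict (\<lambda>p. multiplicity p (E g)) ?P p = g p"
      proof (cases "p \<in> ?P")
        case True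
        then show ?thesis using Emult[OF True, of g] by simp
      next
        case False
        then show ?thesis using PiE_arb[OF g False] by simp
      qed
    qed
    show "E (restrict (\<lambda>p. multiplicity p v) ?P) = v" if v: "v \<in> Sd d" for v
    proof -
      have v0: "v > 0" using v by (simp add: Sd_def)
      have "v = (\<Prod>p\<in>?P. p ^ multiplicity p v)"
        by (rule prod_prime_factors_superset[OF v0 finP Sd_prime_factors[OF v d0]]) auto
      also have "\<dots> = E (restrict (\<lambda>p. multiplicity p v) ?P)"
        unfolding E_def by (rule prod.cong) auto
      finally show ?thesis by (rule sym)
    qed
  qed
  let ?s = "\<lambda>p. inverse (real p ^ multiplicity p d * real p ^ multiplicity p h) * inverse (1 - 1 / (real p)^2)"
  have prodsum: "((\<lambda>g. \<Prod>p\<in>?P. tf p (multiplicity p d) (multiplicity p h) (g p)) has_sum (\<Prod>p\<in>?P. ?s p)) (PiE ?P (\<lambda>_. UNIV :: nat set))"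
    by (rule has_sum_PiE_prod_nonneg, simp, rule tf_has_sum, auto intro: tf_nonneg)
  have "((\<lambda>g. ?f (E g)) has_sum (\<Prod>p\<in>?P. ?s p)) (PiE ?P (\<lambda>_. UNIV :: nat set))"
  proof (rule has_sum_cong[THEN iffD1, OF _ prodsum])
    fix g assume g: "g \<in> PiE ?P (\<lambda>_. UNIV :: nat set)"
    have ES: "E g \<in> Sd d" using bij g by (auto simp: bij_betw_def)
    show "(\<Prod>p\<in>?P. tf p (multiplicity p d) (multiplicity p h) (g p)) = ?f (E g)"
      unfolding f_Sd[OF d0 h0 ES] by (rule prod.cong) (auto simp: Emult)
  qed
  then have main: "(?f has_sum (\<Prod>p\<in>?P. ?s p)) (Sd d)"
    using has_sum_reindex_bij_betw[OF bij] by blast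
  have dr: "real d = (\<Prod>p\<in>?P. real p ^ multiplicity p d)"
    using arg_cong[OF prime_factorization_nat[OF d0], of real] by (simp only: of_nat_prod of_nat_power)
  have hr: "real (dinf_gcd d h) = (\<Prod>p\<in>?P. real p ^ multiplicity p h)"
    unfolding dinf_gcd_eq[OF d0 h0] by (simp only: of_nat_prod of_nat_power)
  have "(\<Prod>p\<in>?P. ?s p) = inverse (\<Prod>p\<in>?P. real p ^ multiplicity p d) * inverse (\<Prod>p\<in>?P. real p ^ multiplicity p h) * (\<Prod>p\<in>?P. inverse (1 - 1 / (real p)^2))"
    by (simp only: prod.distrib inverse_mult_distrib prod_inverse_real)
  also have "\<dots> = 1 / real d * (1 / real (dinf_gcd d h)) * (\<Prod>p\<in>?P. inverse (1 - 1 / (real p)^2))"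
    unfolding dr hr by (simp add: divide_inverse)
  finally show ?thesis using main by simp
qed

lemma D0_dvd_iff:
  fixes D0 :: int and d v :: nat
  assumes sf: "squarefree D0" and d0: "d > 0" and v: "v \<in> Sd d"
  shows "D0 dvd int (d * v) \<longleftrightarrow> (\<forall>p::nat. prime p \<and> int p dvd D0 \<longrightarrow> p dvd d)"
proof
  assume H: "D0 dvd int (d * v)"
  show "\<forall>p::nat. prime p \<and> int p dvd D0 \<longrightarrow> p dvd d"
  proof (intro allI impI)
    fix p :: nat assume p: "prime p \<and> int p dvd D0"
    then have "int p dvd int (d * v)" using H dvd_trans by blast
    then have "p dvd d * v" by (simp only: of_nat_dvd_iff)
    then have "p dvd d \<or> p dvd v" using p prime_dvd_multD by blast
    then show "p dvd d" using v p by (auto simp: Sd_def)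
  qed
next
  assume H: "\<forall>p::nat. prime p \<and> int p dvd D0 \<longrightarrow> p dvd d"
  have D00: "D0 \<noteq> 0" using sf by auto
  have "D0 dvd int d"
  proof (rule multiplicity_le_imp_dvd[OF D00])
    fix q :: int assume q: "prime q"
    have q0: "q \<ge> 0" using prime_gt_0_int[OF q] by simp
    have qn: "int (nat q) = q" using q0 by simp
    have le1: "multiplicity q D0 \<le> 1" using sf D00 q squarefree_factorial_semiring''[of D0] by auto
    show "multiplicity q D0 \<le> multiplicity q (int d)"
    proof (cases "q dvd D0")
      case False
      then show ?thesis by (simp add: not_dvd_imp_multiplicity_0)
    next
      case True
      have "prime (nat q)" using q by simp
      moreover have "int (nat q) dvd D0" using True qn by simp
      ultimately have "nat q dvd d" using H by blast
      then have "q dvd int d" using qn by (metis of_nat_dvd_iff)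
      then have "multiplicity q (int d) > 0"
        using prime_multiplicity_gt_zero_iff[of q "int d"] q d0 by (simp add: abs_of_nonneg[OF q0])
      then show ?thesis using le1 by linarith
    qed
  qed
  then show "D0 dvd int (d * v)" by simp
qed


lemma main_arith:
  fixes D D0 :: int and h d :: nat
  assumes sf: "squarefree D0" and d0: "d > 0" and h0: "h > 0"
  shows "((\<lambda>v. \<Sum>a | a dvd d. real_of_int (moebius_mu a) * deltaU D D0 h (d * v) (a * v))
           has_sum deltaU_d D D0 h d) {v::nat. v > 0 \<and> (\<forall>p. prime p \<and> p dvd v \<longrightarrow> p dvd d)}"
proof -
  let ?cond = "D > 0 \<or> D0 mod 4 \<noteq> 1 \<or> \<not> (\<forall>p::nat. prime p \<and> int p dvd D0 \<longrightarrow> p dvd d)"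
  define C where "C = (if ?cond then 1 else 2 :: real)"
  let ?H = "dinf_gcd d h"
  let ?X = "\<lambda>v a. real (gcd (a * v) h) / (real (totient (d * v)) * real (a * v))"
  let ?val = "1 / real d * (1 / real ?H) * (\<Prod>p\<in>prime_factors d. inverse (1 - 1 / (real p)^2))"
  have set: "{v::nat. v > 0 \<and> (\<forall>p. prime p \<and> p dvd v \<longrightarrow> p dvd d)} = Sd d" by (simp add: Sd_def)
  have dU: "deltaU D D0 h (d * v) (a * v) = C * ?X v a" if "v \<in> Sd d" for a v
    unfolding deltaU_def C_def using D0_dvd_iff[OF sf d0 that] by auto
  have sums: "(\<Sum>a | a dvd d. real_of_int (moebius_mu a) * deltaU D D0 h (d * v) (a * v)) =
        C * (\<Sum>a | a dvd d. real_of_int (moebius_mu a) * ?X v a)" if "v \<in> Sd d" for v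
    unfolding sum_distrib_left by (rule sum.cong[OF refl]) (simp only: dU[OF that] mult.left_commute)
  have Hpos: "?H > 0" unfolding dinf_gcd_eq[OF d0 h0]
    by (auto intro!: prod_pos prime_gt_0_nat dest: in_prime_factors_imp_prime)
  have val: "deltaU_d D D0 h d = C * ?val"
  proof (cases ?cond)
    case True
    then show ?thesis unfolding deltaU_d_def etaU_def C_def by simp
  next
    case False
    have one: "1 \<in> Sd d" by (simp add: Sd_def)
    have dv: "D0 dvd int d" using D0_dvd_iff[OF sf d0 one] False by simp
    have D00: "D0 \<noteq> 0" using sf by auto
    have g: "gcd (int d) D0 = \<bar>D0\<bar>" using dv gcd_proj2_iff[of "int d" D0] by simp
    have q: "D0 div \<bar>D0\<bar> = 1 \<or> D0 div \<bar>D0\<bar> = -1"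
    proof (cases "D0 > 0")
      case True then show ?thesis by simp
    next
      case False
      then have "\<bar>D0\<bar> = - D0" by simp
      moreover have "D0 div (- D0) = -1"
        using D00 div_minus_right[of D0 D0] zdiv_zminus1_eq_if[of D0 D0] by simp
      ultimately show ?thesis by simp
    qed
    have l: "lcm (int ?H) (D0 div gcd (int d) D0) = int ?H"
      unfolding g using q by auto
    have eta: "etaU D D0 h d = 1 / real ?H"
      unfolding etaU_def using False l Hpos by (simp add: power2_eq_square)
    show ?thesis unfolding deltaU_d_def eta C_def using False by simp
  qed
  have "((\<lambda>v. C * (\<Sum>a | a dvd d. real_of_int (moebius_mu a) * ?X v a)) has_sum (C * ?val)) (Sd d)"
    by (rule has_sum_cmult_right[OF core_has_sum[OF d0 h0]])
  then have "((\<lambda>v. \<Sum>a | a dvd d. real_of_int (moebius_mu a) * deltaU D D0 h (d * v) (a * v)) has_sum (C * ?val)) (Sd d)"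
    by (rule has_sum_cong[THEN iffD1, rotated]) (simp add: sums)
  then show ?thesis unfolding set val .
qed

theorem lemma6p4:
  fixes a1 a2 :: int and \<alpha> \<beta> :: complex and \<Delta> \<Delta>0 :: int and h d :: nat
  assumes "a1 \<noteq> 0" and "a2 \<noteq> 0"
    and roots: "\<alpha> + \<beta> = of_int a1" "\<alpha> * \<beta> = - of_int a2"
    and not_root_of_unity: "\<forall>n::nat. n > 0 \<longrightarrow> (\<alpha> / \<beta>) ^ n \<noteq> 1"
    and Delta: "\<Delta> = a1^2 + 4 * a2"
    and Delta_nonsq: "\<not> (\<exists>k::int. \<Delta> = k^2)"
    and Delta0: "squarefree \<Delta>0" "\<exists>k::int. \<Delta> = \<Delta>0 * k^2"
    and h_def: "h = (GREATEST n::nat. n > 0 \<and> (\<exists>x\<in>quad_field \<Delta>. x ^ n = \<alpha> / \<beta>))"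
    and d: "d > 0" "odd d" "\<Delta>0 = -3 \<longrightarrow> \<not> 3 dvd d"
  shows "((\<lambda>v. \<Sum>a | a dvd d. real_of_int (moebius_mu a) * deltaU \<Delta> \<Delta>0 h (d * v) (a * v))
           has_sum deltaU_d \<Delta> \<Delta>0 h d)
         {v::nat. v > 0 \<and> (\<forall>p. prime p \<and> p dvd v \<longrightarrow> p dvd d)}"
proof -
  have h0: "h > 0" unfolding h_def
    by (rule h_pos[OF assms(2) roots not_root_of_unity Delta Delta_nonsq])
  show ?thesis by (rule main_arith[OF Delta0(1) d(1) h0])
qed

end
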